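(* For every integer $m\geq 1$ and every $\varepsilon\in(0,1]$ there exists $\gamma_0>0$ such that for every $\gamma\in(0,\gamma_0]$ there exists $d_0$ such that the following holds for all $d\geq d_0$ and all reals $q\geq 1/2$. Let $G$ be an $n$-vertex graph with maximum degree $\Delta(G)\leq d$ containing a vertex set $V\subseteq V(G)$ with $|V|=(1\pm\gamma)qn$ and $d_G(v,V)=(1\pm\gamma)qd$ for each $v\in V(G)$. Let $t=\lceil(1-\varepsilon)qn/m\rceil$. Then $G[V]$ contains vertex-disjoint paths $P_1,\dots,P_t$, each of length $m-1$ (i.e. with $m$ vertices), such that each vertex of $G$ has at most $4d/m$ neighbours in $G$ among the endvertices of $P_1,\dots,P_t$.
   Context: For a vertex $v$ and vertex set $U$, $d_G(v,U)=|N_G(v)\cap U|$. For reals $a,b,c$, $a=(1\pm b)c$ means $(1-b)c\leq a\leq(1+b)c$. $G[V]$ is the subgraph of $G$ induced by $V$. *)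

theory Defs
  imports Complex_Main
begin

definition simple_graph :: "'a set \<Rightarrow> ('a \<Rightarrow> 'a \<Rightarrow> bool) \<Rightarrow> bool" where
  "simple_graph Vg E \<longleftrightarrow> finite Vg \<and> (\<forall>u v. E u v \<longrightarrow> u \<in> Vg \<and> v \<in> Vg)
     \<and> (\<forall>u v. E u v \<longrightarrow> E v u) \<and> (\<forall>v. \<not> E v v)"

definition dG :: "('a \<Rightarrow> 'a \<Rightarrow> bool) \<Rightarrow> 'a \<Rightarrow> 'a set \<Rightarrow> nat" where
  "dG E v U = card {u \<in> U. E v u}"

definition pm_approx :: "real \<Rightarrow> real \<Rightarrow> real \<Rightarrow> bool" where
  "pm_approx a b c \<longleftrightarrow> (1 - b) * c \<le> a \<and> a \<le> (1 + b) * c"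

definition is_path_in :: "('a \<Rightarrow> 'a \<Rightarrow> bool) \<Rightarrow> 'a set \<Rightarrow> 'a list \<Rightarrow> bool" where
  "is_path_in E V P \<longleftrightarrow> P \<noteq> [] \<and> distinct P \<and> set P \<subseteq> V
     \<and> (\<forall>i. i + 1 < length P \<longrightarrow> E (P ! i) (P ! (i + 1)))"

end

theory Submission
  imports Defs "HOL-Library.FuncSet"
begin

lemma hall:
  fixes X :: "'a set" and N :: "'a \<Rightarrow> 'b set"
  assumes "finite X" "\<forall>x\<in>X. finite (N x)" "\<forall>S\<subseteq>X. card S \<le> card (\<Union>(N ` S))"
  shows "\<exists>f. inj_on f X \<and> (\<forall>x\<in>X. f x \<in> N x)"
  using assms
proof (induction "card X" arbitrary: X N rule: less_induct)
  case less
  show ?case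
  proof (cases "X = {}")
    case True then show ?thesis by auto
  next
    case Xne: False
    have finU: "\<And>S. S \<subseteq> X \<Longrightarrow> finite (\<Union>(N ` S))"
      proof -
      fix S assume "S \<subseteq> X"
      then show "finite (\<Union>(N ` S))" using less.prems(1,2) by (intro finite_UN_I) (auto intro: finite_subset)
    qed
    show ?thesis
    proof (cases "\<exists>S. S \<noteq> {} \<and> S \<subset> X \<and> card (\<Union>(N ` S)) \<le> card S")
      case True
      then obtain S where S: "S \<noteq> {}" "S \<subset> X" "card (\<Union>(N ` S)) \<le> card S" by blast
      define NS where "NS = \<Union>(N ` S)"
      have SX: "S \<subseteq> X" using S(2) by blast
      have "card S \<le> card NS" using less.prems(3) SX unfolding NS_def by blast
      then have cNS: "card NS = card S" using S(3) unfolding NS_def by linarith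
      have fS: "finite S" using S less.prems(1) finite_subset by blast
      have "card S < card X" using psubset_card_mono[OF less.prems(1) S(2)] .
      moreover have "\<forall>T\<subseteq>S. card T \<le> card (\<Union>(N ` T))" using SX less.prems(3) by (meson subset_trans)
      ultimately have "\<exists>f. inj_on f S \<and> (\<forall>x\<in>S. f x \<in> N x)"
        using fS less.prems(2) SX by (intro less.hyps) (auto simp del: Union_iff)
      then obtain f1 where f1: "inj_on f1 S" "\<forall>x\<in>S. f1 x \<in> N x" by blast
      define N2 where "N2 = (\<lambda>x. N x - NS)"
      have "card (X - S) < card X" proof -
        have "X - S \<subset> X" using S by blast
        then show ?thesis using less.prems(1) by (rule psubset_card_mono[rotated])
      qed
      moreover have "\<forall>T\<subseteq>X - S. card T \<le> card (\<Union>(N2 ` T))"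
      proof (intro allI impI)
        fix T assume T: "T \<subseteq> X - S"
        have eq: "\<Union>(N2 ` T) = \<Union>(N ` (T \<union> S)) - NS" unfolding N2_def NS_def by auto
        have sub: "NS \<subseteq> \<Union>(N ` (T \<union> S))" unfolding NS_def by auto
        have fin: "finite (\<Union>(N ` (T \<union> S)))" using finU T S by auto
        have "card (\<Union>(N2 ` T)) = card (\<Union>(N ` (T \<union> S))) - card NS"
          using eq sub fin by (simp add: card_Diff_subset finite_subset)
        moreover have "card (T \<union> S) \<le> card (\<Union>(N ` (T \<union> S)))"
          proof -
          have "T \<union> S \<subseteq> X" using T SX by blast
          then show ?thesis using less.prems(3) by blast
        qed
        moreover have "card (T \<union> S) = card T + card S"
          using T fS less.prems(1) by (subst card_Un_disjoint) (auto intro: finite_subset)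
        ultimately show "card T \<le> card (\<Union>(N2 ` T))" using cNS by linarith
      qed
      ultimately have "\<exists>f. inj_on f (X - S) \<and> (\<forall>x\<in>X - S. f x \<in> N2 x)"
        using less.prems(1,2) unfolding N2_def by (intro less.hyps) auto
      then obtain f2 where f2: "inj_on f2 (X - S)" "\<forall>x\<in>X - S. f2 x \<in> N2 x" by blast
      define f where "f = (\<lambda>x. if x \<in> S then f1 x else f2 x)"
      have "inj_on f X"
        unfolding inj_on_def
      proof (intro ballI impI)
        fix x y assume xy: "x \<in> X" "y \<in> X" "f x = f y"
        show "x = y"
        proof (cases "x \<in> S"; cases "y \<in> S")
          assume "x \<in> S" "y \<in> S" then show ?thesis using xy f1 unfolding f_def inj_on_def by auto
        next
          assume a: "x \<in> S" "y \<notin> S"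
          then have "f x \<in> NS" using f1 unfolding f_def NS_def by auto
          moreover have "f y \<notin> NS" using a f2 xy(2) unfolding f_def N2_def by auto
          ultimately show ?thesis using xy by auto
        next
          assume a: "x \<notin> S" "y \<in> S"
          then have "f y \<in> NS" using f1 unfolding f_def NS_def by auto
          moreover have "f x \<notin> NS" using a f2 xy(1) unfolding f_def N2_def by auto
          ultimately show ?thesis using xy by auto
        next
          assume "x \<notin> S" "y \<notin> S" then show ?thesis using xy f2 unfolding f_def inj_on_def by auto
        qed
      qed
      moreover have "\<forall>x\<in>X. f x \<in> N x" using f1 f2 unfolding f_def N2_def by auto
      ultimately show ?thesis by blast
    next
      case False
      then have strict: "\<And>S. S \<noteq> {} \<Longrightarrow> S \<subset> X \<Longrightarrow> card S < card (\<Union>(N ` S))"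
        using not_le by blast
      obtain x where x: "x \<in> X" using Xne by auto
      have "card {x} \<le> card (N x)" using less.prems(3)[rule_format, of "{x}"] x by simp
      then have "N x \<noteq> {}" by auto
      then obtain y where y: "y \<in> N x" by auto
      define N' where "N' = (\<lambda>z. N z - {y})"
      have c1: "card (X - {x}) < card X" using x less.prems(1) by (meson card_Diff1_less)
      have finX': "finite (X - {x})" using less.prems(1) by blast
      have finN': "\<forall>z\<in>X - {x}. finite (N' z)" using less.prems(2) unfolding N'_def by blast
      have hc: "\<forall>T\<subseteq>X - {x}. card T \<le> card (\<Union>(N' ` T))"
      proof (intro allI impI)
        fix T assume T: "T \<subseteq> X - {x}"
        show "card T \<le> card (\<Union>(N' ` T))"
        proof (cases "T = {}")
          case True then show ?thesis by simp
        next
          case False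
          have "T \<subset> X" using T x by auto
          then have "card T < card (\<Union>(N ` T))" using strict False by auto
          moreover have eq: "\<Union>(N' ` T) = \<Union>(N ` T) - {y}" unfolding N'_def by auto
          moreover have "card (\<Union>(N ` T)) - 1 \<le> card (\<Union>(N' ` T))"
            unfolding eq by (simp add: card_Diff_singleton_if)
          ultimately show ?thesis by linarith
        qed
      qed
      have "\<exists>f. inj_on f (X - {x}) \<and> (\<forall>z\<in>X - {x}. f z \<in> N' z)"
        by (rule less.hyps[OF c1 finX' finN' hc])
      then obtain f' where f': "inj_on f' (X - {x})" "\<forall>z\<in>X - {x}. f' z \<in> N' z" by blast
      define f where "f = f'(x := y)"
      have "inj_on f X" unfolding inj_on_def
      proof (intro ballI impI)
        fix a b assume ab: "a \<in> X" "b \<in> X" "f a = f b"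
        show "a = b"
        proof (cases "a = x"; cases "b = x")
          assume "a \<noteq> x" "b \<noteq> x" then show ?thesis using ab f'(1) unfolding f_def inj_on_def by auto
        next
          assume "a = x" "b \<noteq> x" then show ?thesis using ab f'(2) unfolding f_def N'_def by auto
        next
          assume "a \<noteq> x" "b = x" then show ?thesis using ab f'(2) unfolding f_def N'_def by auto
        qed simp
      qed
      moreover have "\<forall>z\<in>X. f z \<in> N z" using f' y unfolding f_def N'_def by auto
      ultimately show ?thesis by blast
    qed
  qed
qed

lemma hall_defect:
  fixes X :: "'a set" and N :: "'a \<Rightarrow> 'b set" and k :: nat
  assumes "finite X" "\<forall>x\<in>X. finite (N x)" "\<forall>S\<subseteq>X. card S \<le> card (\<Union>(N ` S)) + k"
  shows "\<exists>A f. A \<subseteq> X \<and> card X \<le> card A + k \<and> inj_on f A \<and> (\<forall>x\<in>A. f x \<in> N x)"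
proof -
  define N' :: "'a \<Rightarrow> ('b + nat) set" where "N' = (\<lambda>x. Inl ` N x \<union> Inr ` {..<k})"
  have fin': "\<forall>x\<in>X. finite (N' x)" using assms(2) unfolding N'_def by auto
  have hc: "\<forall>S\<subseteq>X. card S \<le> card (\<Union>(N' ` S))"
  proof (intro allI impI)
    fix S assume S: "S \<subseteq> X"
    show "card S \<le> card (\<Union>(N' ` S))"
    proof (cases "S = {}")
      case True then show ?thesis by simp
    next
      case False
      have fU: "finite (\<Union>(N ` S))" using S assms(1,2) by (intro finite_UN_I) (auto intro: finite_subset)
      have eq: "\<Union>(N' ` S) = Inl ` \<Union>(N ` S) \<union> Inr ` {..<k}" unfolding N'_def using False by auto
      have "card (\<Union>(N' ` S)) = card (Inl ` \<Union>(N ` S) :: ('b + nat) set) + card (Inr ` {..<k} :: ('b + nat) set)"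
        unfolding eq by (rule card_Un_disjoint) (use fU in auto)
      also have "\<dots> = card (\<Union>(N ` S)) + k" by (simp add: card_image)
      finally show ?thesis using assms(3) S by auto
    qed
  qed
  obtain g where g: "inj_on g X" "\<forall>x\<in>X. g x \<in> N' x"
    using hall[OF assms(1) fin' hc] by blast
  define A where "A = {x\<in>X. isl (g x)}"
  define f where "f = (\<lambda>x. projl (g x))"
  have "inj_on f A"
    unfolding inj_on_def A_def f_def
  proof (intro ballI impI)
    fix a b assume ab: "a \<in> {x \<in> X. isl (g x)}" "b \<in> {x \<in> X. isl (g x)}" "projl (g a) = projl (g b)"
    then have "g a = g b" by (metis mem_Collect_eq sum.collapse(1))
    then show "a = b" using g(1) ab unfolding inj_on_def by auto
  qed
  moreover have "\<forall>x\<in>A. f x \<in> N x" using g(2) unfolding A_def f_def N'_def by auto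
  moreover have "card X \<le> card A + k"
  proof -
    have "g ` (X - A) \<subseteq> Inr ` {..<k}" using g(2) unfolding A_def N'_def by auto
    moreover have "inj_on g (X - A)" using g(1) by (meson Diff_subset inj_on_subset)
    ultimately have "card (X - A) \<le> card (Inr ` {..<k} :: ('b + nat) set)"
      by (metis card_image card_mono finite_imageI finite_lessThan)
    then have "card (X - A) \<le> k" by (simp add: card_image)
    moreover have "card X = card A + card (X - A)"
      using assms(1) unfolding A_def by (metis (no_types, lifting) card_Diff_subset card_mono finite_subset le_add_diff_inverse mem_Collect_eq subsetI)
    ultimately show ?thesis by linarith
  qed
  moreover have "A \<subseteq> X" unfolding A_def by auto
  ultimately show ?thesis by blast
qed

lemma double_count:
  assumes "finite S" "finite T"
  shows "(\<Sum>x\<in>S. card {y\<in>T. R x y}) = (\<Sum>y\<in>T. card {x\<in>S. R x y})"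
proof -
  have "(\<Sum>x\<in>S. card {y\<in>T. R x y}) = (\<Sum>x\<in>S. \<Sum>y\<in>T. if R x y then 1 else 0)"
    using assms by (simp add: sum.If_cases Int_def conj_commute)
  also have "\<dots> = (\<Sum>y\<in>T. \<Sum>x\<in>S. if R x y then 1 else 0)" by (rule sum.swap)
  also have "\<dots> = (\<Sum>y\<in>T. card {x\<in>S. R x y})"
    using assms by (simp add: sum.If_cases Int_def conj_commute)
  finally show ?thesis .
qed

lemma matching_deg:
  fixes X :: "'a set" and Y :: "'a set" and \<Delta> :: real
  assumes fin: "finite X" "finite Y" and D: "\<Delta> > 0"
    and dx: "\<forall>x\<in>X. real (card {y\<in>Y. R x y}) \<le> \<Delta>"
    and dy: "\<forall>y\<in>Y. real (card {x\<in>X. R x y}) \<le> \<Delta>"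
  shows "\<exists>A f. A \<subseteq> X \<and> inj_on f A \<and> (\<forall>x\<in>A. f x \<in> Y \<and> R x (f x))
           \<and> real (card (X - A)) \<le> real (card X) - (\<Sum>x\<in>X. real (card {y\<in>Y. R x y})) / \<Delta> + 1"
proof -
  define N where "N = (\<lambda>x. {y\<in>Y. R x y})"
  define c where "c = real (card X) - (\<Sum>x\<in>X. real (card {y\<in>Y. R x y})) / \<Delta>"
  define k where "k = nat \<lceil>c\<rceil>"
  have hc: "\<forall>S\<subseteq>X. card S \<le> card (\<Union>(N ` S)) + k"
  proof (intro allI impI)
    fix S assume S: "S \<subseteq> X"
    define U where "U = \<Union>(N ` S)"
    have fS: "finite S" using S fin by (meson finite_subset)
    have fU: "finite U" unfolding U_def N_def by (rule finite_subset[of _ Y]) (use fin in auto)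
    have "(\<Sum>x\<in>S. card {y\<in>Y. R x y}) = (\<Sum>x\<in>S. card {y\<in>U. R x y})"
      unfolding U_def N_def by (intro sum.cong refl arg_cong[where f=card]) auto
    also have "\<dots> = (\<Sum>y\<in>U. card {x\<in>S. R x y})" using double_count[OF fS fU] .
    finally have e1: "(\<Sum>x\<in>S. real (card {y\<in>Y. R x y})) = (\<Sum>y\<in>U. real (card {x\<in>S. R x y}))"
      by (metis (no_types, lifting) of_nat_sum sum.cong)
    have "(\<Sum>y\<in>U. real (card {x\<in>S. R x y})) \<le> (\<Sum>y\<in>U. \<Delta>)"
    proof (intro sum_mono)
      fix y assume y: "y \<in> U"
      then have "y \<in> Y" unfolding U_def N_def by auto
      then have "real (card {x\<in>X. R x y}) \<le> \<Delta>" using dy by auto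
      moreover have "card {x\<in>S. R x y} \<le> card {x\<in>X. R x y}" using S fin by (intro card_mono) auto
      ultimately show "real (card {x\<in>S. R x y}) \<le> \<Delta>" by linarith
    qed
    then have e2: "(\<Sum>x\<in>S. real (card {y\<in>Y. R x y})) / \<Delta> \<le> real (card U)" using e1 D
      by (simp add: divide_le_eq mult.commute)
    have "real (card S) - (\<Sum>x\<in>S. real (card {y\<in>Y. R x y})) / \<Delta> = (\<Sum>x\<in>S. 1 - real (card {y\<in>Y. R x y}) / \<Delta>)"
      by (simp add: sum_subtractf sum_divide_distrib)
    also have "\<dots> \<le> (\<Sum>x\<in>X. 1 - real (card {y\<in>Y. R x y}) / \<Delta>)"
      using S fin dx D by (intro sum_mono2) auto
    also have "\<dots> = c" unfolding c_def by (simp add: sum_subtractf sum_divide_distrib)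
    finally have "real (card S) \<le> real (card U) + c" using e2 by linarith
    then have "real (card S) \<le> real (card U) + real k" unfolding k_def by linarith
    then show "card S \<le> card (\<Union>(N ` S)) + k" unfolding U_def by linarith
  qed
  obtain A f where A: "A \<subseteq> X" "card X \<le> card A + k" "inj_on f A" "\<forall>x\<in>A. f x \<in> N x"
    using hall_defect[OF fin(1) _ hc] fin unfolding N_def by auto
  have "card (X - A) = card X - card A" using A(1) fin by (simp add: card_Diff_subset finite_subset)
  then have "real (card (X - A)) \<le> real k" using A(2) by linarith
  also have "\<dots> \<le> c + 1"
  proof -
    have "c = (\<Sum>x\<in>X. 1 - real (card {y\<in>Y. R x y}) / \<Delta>)"
      unfolding c_def by (simp add: sum_subtractf sum_divide_distrib)
    also have "\<dots> \<ge> 0" using dx D by (intro sum_nonneg) auto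
    finally have c0: "c \<ge> 0" .
    then have "real k = real_of_int \<lceil>c\<rceil>" unfolding k_def by simp
    then show ?thesis by linarith
  qed
  finally show ?thesis using A unfolding N_def c_def by blast
qed

lemma weighted_sum:
  fixes V S :: "'a set" and m i :: nat and la :: real
  assumes fin: "finite V" and S: "S \<subseteq> V" and i: "i < m"
  shows "(\<Sum>f\<in>PiE V (\<lambda>_. {..<m}). la ^ card {u\<in>S. f u = i})
         = (la + (real m - 1)) ^ card S * real m ^ (card V - card S)"
proof -
  define w where "w = (\<lambda>u y. if u \<in> S \<and> y = i then la else (1::real))"
  have key: "la ^ card {u\<in>S. f u = i} = (\<Prod>u\<in>V. w u (f u))" for f
  proof -
    have "(\<Prod>u\<in>V. w u (f u)) = (\<Prod>u\<in>V \<inter> {u. u \<in> S \<and> f u = i}. la) * (\<Prod>u\<in>V - {u. u \<in> S \<and> f u = i}. 1)"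
      unfolding w_def using fin by (simp add: prod.If_cases)
    also have "V \<inter> {u. u \<in> S \<and> f u = i} = {u\<in>S. f u = i}" using S by auto
    finally show ?thesis by simp
  qed
  have "(\<Sum>f\<in>PiE V (\<lambda>_. {..<m}). la ^ card {u\<in>S. f u = i})
      = (\<Sum>f\<in>PiE V (\<lambda>_. {..<m}). \<Prod>u\<in>V. w u (f u))" using key by simp
  also have "\<dots> = (\<Prod>u\<in>V. \<Sum>y\<in>{..<m}. w u y)" using fin by (simp add: prod_sum_PiE)
  also have "\<dots> = (\<Prod>u\<in>V. if u \<in> S then la + (real m - 1) else real m)"
  proof (intro prod.cong refl)
    fix u assume "u \<in> V"
    show "(\<Sum>y\<in>{..<m}. w u y) = (if u \<in> S then la + (real m - 1) else real m)"
    proof (cases "u \<in> S")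
      case True
      have "(\<Sum>y\<in>{..<m}. w u y) = (\<Sum>y\<in>{..<m}. 1 + (if y = i then la - 1 else 0))"
        unfolding w_def using True by (intro sum.cong) auto
      also have "\<dots> = real m + (la - 1)" using i by (simp add: sum.distrib)
      finally show ?thesis using True by simp
    next
      case False then show ?thesis unfolding w_def by simp
    qed
  qed
  also have "\<dots> = (la + (real m - 1)) ^ card S * real m ^ (card V - card S)"
  proof -
    have "(\<Prod>u\<in>V. if u \<in> S then la + (real m - 1) else real m)
        = (\<Prod>u\<in>V \<inter> {u. u \<in> S}. la + (real m - 1)) * (\<Prod>u\<in>V \<inter> - {u. u \<in> S}. real m)"
      using fin by (rule prod.If_cases)
    also have "V \<inter> {u. u \<in> S} = S" using S by auto
    also have "V \<inter> - {u. u \<in> S} = V - S" by auto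
    finally have X: "(\<Prod>u\<in>V. if u \<in> S then la + (real m - 1) else real m)
        = (\<Prod>u\<in>S. la + (real m - 1)) * (\<Prod>u\<in>V - S. real m)" .
    have "card (V - S) = card V - card S" using fin S by (simp add: card_Diff_subset finite_subset)
    then show ?thesis using X by simp
  qed
  finally show ?thesis .
qed

lemma tail_generic:
  fixes V S :: "'a set" and m i :: nat and la a :: real and T :: "('a \<Rightarrow> nat) \<Rightarrow> bool"
  assumes fin: "finite V" and S: "S \<subseteq> V" and i: "i < m" and lam: "la > 0"
    and T: "\<And>f. T f \<Longrightarrow> la powr a \<le> la ^ card {u\<in>S. f u = i}"
  shows "real (card {f\<in>PiE V (\<lambda>_. {..<m}). T f})
         \<le> real m ^ card V * exp ((la - 1) * real (card S) / real m - a * ln la)"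
proof -
  define F where "F = PiE V (\<lambda>_. {..<m})"
  have fF: "finite F" unfolding F_def using fin by (simp add: finite_PiE)
  have m0: "m > 0" using i by auto
  have pa: "la powr a > 0" using lam by simp
  have "real (card {f\<in>F. T f}) = (\<Sum>f\<in>{f\<in>F. T f}. 1)" by simp
  also have "\<dots> \<le> (\<Sum>f\<in>{f\<in>F. T f}. la ^ card {u\<in>S. f u = i} / la powr a)"
    using T pa by (intro sum_mono) (auto simp: field_simps)
  also have "\<dots> \<le> (\<Sum>f\<in>F. la ^ card {u\<in>S. f u = i} / la powr a)"
    using fF lam by (intro sum_mono2) auto
  also have "\<dots> = (\<Sum>f\<in>F. la ^ card {u\<in>S. f u = i}) / la powr a"
    by (simp add: sum_divide_distrib)
  also have "\<dots> = (la + (real m - 1)) ^ card S * real m ^ (card V - card S) / la powr a"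
    unfolding F_def using weighted_sum[OF fin S i] by simp
  also have "\<dots> \<le> real m ^ card V * exp ((la - 1) * real (card S) / real m - a * ln la)"
  proof -
    have cs: "card S \<le> card V" using S fin by (simp add: card_mono)
    have b: "(la + (real m - 1)) = real m * (1 + (la - 1) / real m)" using m0 by (simp add: field_simps)
    have "1 + (la - 1) / real m \<le> exp ((la - 1) / real m)" by (rule exp_ge_add_one_self)
    moreover have "0 \<le> 1 + (la - 1) / real m" using lam m0 by (simp add: field_simps)
    ultimately have c: "(1 + (la - 1) / real m) ^ card S \<le> exp ((la - 1) / real m) ^ card S"
      by (rule power_mono)
    have "(la + (real m - 1)) ^ card S * real m ^ (card V - card S)
        = real m ^ card V * (1 + (la - 1) / real m) ^ card S"
      unfolding b using cs by (simp add: power_mult_distrib power_add[symmetric] mult_ac)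
    also have "\<dots> \<le> real m ^ card V * exp ((la - 1) / real m) ^ card S"
      using c by (intro mult_left_mono) auto
    also have "exp ((la - 1) / real m) ^ card S = exp ((la - 1) * real (card S) / real m)"
      by (simp add: exp_of_nat_mult[symmetric] mult_ac)
    finally have d: "(la + (real m - 1)) ^ card S * real m ^ (card V - card S)
        \<le> real m ^ card V * exp ((la - 1) * real (card S) / real m)" .
    have "la powr a = exp (a * ln la)" using lam by (simp add: powr_def mult_ac)
    then have "(la + (real m - 1)) ^ card S * real m ^ (card V - card S) / la powr a
        \<le> real m ^ card V * exp ((la - 1) * real (card S) / real m) / exp (a * ln la)"
      using d by (simp add: divide_right_mono)
    also have "\<dots> = real m ^ card V * exp ((la - 1) * real (card S) / real m - a * ln la)"
      by (simp add: exp_diff)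
    finally show ?thesis .
  qed
  finally show ?thesis unfolding F_def .
qed

lemma tail_upper:
  fixes V S :: "'a set" and m i :: nat and x :: real
  assumes fin: "finite V" and S: "S \<subseteq> V" and i: "i < m" and x: "0 < x"
  shows "real (card {f\<in>PiE V (\<lambda>_. {..<m}). real (card {u\<in>S. f u = i}) > (1 + x) * real (card S) / real m})
         \<le> real m ^ card V * exp (- ((1 + x) * ln (1 + x) - x) * real (card S) / real m)"
proof -
  have "real (card {f\<in>PiE V (\<lambda>_. {..<m}). real (card {u\<in>S. f u = i}) > (1 + x) * real (card S) / real m})
     \<le> real m ^ card V * exp ((1 + x - 1) * real (card S) / real m - (1 + x) * real (card S) / real m * ln (1 + x))"
  proof (rule tail_generic[OF fin S i])
    show "0 < 1 + x" using x by simp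
    fix f :: "'a \<Rightarrow> nat" assume "(1 + x) * real (card S) / real m < real (card {u\<in>S. f u = i})"
    then have "(1 + x) powr ((1 + x) * real (card S) / real m) \<le> (1 + x) powr real (card {u\<in>S. f u = i})"
      using x by (intro powr_mono) auto
    then show "(1 + x) powr ((1 + x) * real (card S) / real m) \<le> (1 + x) ^ card {u\<in>S. f u = i}"
      using x by (simp add: powr_realpow)
  qed
  also have "(1 + x - 1) * real (card S) / real m - (1 + x) * real (card S) / real m * ln (1 + x)
      = - ((1 + x) * ln (1 + x) - x) * real (card S) / real m" using i by (simp add: field_simps)
  finally show ?thesis .
qed

lemma tail_lower:
  fixes V S :: "'a set" and m i :: nat and x :: real
  assumes fin: "finite V" and S: "S \<subseteq> V" and i: "i < m" and x: "0 < x" "x < 1"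
  shows "real (card {f\<in>PiE V (\<lambda>_. {..<m}). real (card {u\<in>S. f u = i}) < (1 - x) * real (card S) / real m})
         \<le> real m ^ card V * exp (- (x + (1 - x) * ln (1 - x)) * real (card S) / real m)"
proof -
  have "real (card {f\<in>PiE V (\<lambda>_. {..<m}). real (card {u\<in>S. f u = i}) < (1 - x) * real (card S) / real m})
     \<le> real m ^ card V * exp ((1 - x - 1) * real (card S) / real m - (1 - x) * real (card S) / real m * ln (1 - x))"
  proof (rule tail_generic[OF fin S i])
    show "0 < 1 - x" using x by simp
    fix f :: "'a \<Rightarrow> nat" assume "real (card {u\<in>S. f u = i}) < (1 - x) * real (card S) / real m"
    then have "(1 - x) powr ((1 - x) * real (card S) / real m) \<le> (1 - x) powr real (card {u\<in>S. f u = i})"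
      using x by (intro powr_mono') auto
    then show "(1 - x) powr ((1 - x) * real (card S) / real m) \<le> (1 - x) ^ card {u\<in>S. f u = i}"
      using x by (simp add: powr_realpow)
  qed
  also have "(1 - x - 1) * real (card S) / real m - (1 - x) * real (card S) / real m * ln (1 - x)
      = - (x + (1 - x) * ln (1 - x)) * real (card S) / real m" using i by (simp add: field_simps)
  finally show ?thesis .
qed

lemma ln_strict: "0 < (y::real) \<Longrightarrow> y \<noteq> 1 \<Longrightarrow> ln y < y - 1"
proof -
  assume y: "0 < y" "y \<noteq> 1"
  have "ln y \<le> y - 1" using y ln_le_minus_one by auto
  moreover have "ln y \<noteq> y - 1" using y ln_eq_minus_one by auto
  ultimately show ?thesis by linarith
qed

lemma c1_pos: "0 < x \<Longrightarrow> 0 < (1 + x) * ln (1 + x) - (x::real)"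
proof -
  assume x: "0 < x"
  have "ln (1 / (1 + x)) < 1 / (1 + x) - 1" using x by (intro ln_strict) auto
  then have "- ln (1 + x) < 1 / (1 + x) - 1" using x by (simp add: ln_div)
  then have "x / (1 + x) < ln (1 + x)" using x by (simp add: field_simps)
  then show ?thesis using x by (simp add: field_simps)
qed

lemma c2_pos: "0 < x \<Longrightarrow> x < 1 \<Longrightarrow> 0 < x + (1 - x) * ln (1 - (x::real))"
proof -
  assume x: "0 < x" "x < 1"
  have "ln (1 / (1 - x)) < 1 / (1 - x) - 1" using x by (intro ln_strict) auto
  then have "- ln (1 - x) < 1 / (1 - x) - 1" using x by (simp add: ln_div)
  then have "- ln (1 - x) < x / (1 - x)" using x by (simp add: field_simps)
  then have "- ln (1 - x) * (1 - x) < x" using x by (simp add: field_simps)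
  then show ?thesis by (simp add: algebra_simps)
qed

definition badv :: "nat \<Rightarrow> real \<Rightarrow> ('a \<Rightarrow> nat) \<Rightarrow> 'a set \<Rightarrow> bool" where
  "badv m x f S \<longleftrightarrow> (\<exists>i<m. real (card {u\<in>S. f u = i}) > (1 + x) * real (card S) / real m
                        \<or> real (card {u\<in>S. f u = i}) < (1 - x) * real (card S) / real m)"

definition cc :: "real \<Rightarrow> real" where
  "cc x = min ((1 + x) * ln (1 + x) - x) (x + (1 - x) * ln (1 - x))"

lemma cc_pos: "0 < x \<Longrightarrow> x < 1 \<Longrightarrow> 0 < cc x"
  unfolding cc_def using c1_pos c2_pos by auto

lemma bad_one:
  fixes V S :: "'a set" and m :: nat and x s0 :: real
  assumes fin: "finite V" and S: "S \<subseteq> V" and m: "m \<ge> 1" and x: "0 < x" "x < 1"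
    and s0: "s0 \<le> real (card S)"
  shows "real (card {f\<in>PiE V (\<lambda>_. {..<m}). badv m x f S})
         \<le> real m ^ card V * (2 * real m * exp (- cc x * s0 / real m))"
proof -
  define F where "F = PiE V (\<lambda>_. {..<m})"
  define U where "U = (\<lambda>i. {f\<in>F. real (card {u\<in>S. f u = i}) > (1 + x) * real (card S) / real m})"
  define L where "L = (\<lambda>i. {f\<in>F. real (card {u\<in>S. f u = i}) < (1 - x) * real (card S) / real m})"
  have fF: "finite F" unfolding F_def using fin by (simp add: finite_PiE)
  have sub: "{f\<in>F. badv m x f S} \<subseteq> (\<Union>i<m. U i \<union> L i)"
    unfolding badv_def U_def L_def by auto
  have ex: "exp (- cc x * real (card S) / real m) \<le> exp (- cc x * s0 / real m)"
  proof -
    have "cc x * s0 \<le> cc x * real (card S)" using cc_pos[OF x] s0 by (simp add: mult_left_mono)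
    then show ?thesis using m by (simp add: divide_right_mono)
  qed
  have bi: "real (card (U i \<union> L i)) \<le> 2 * (real m ^ card V * exp (- cc x * s0 / real m))" if i: "i < m" for i
  proof -
    have "real (card (U i)) \<le> real m ^ card V * exp (- ((1 + x) * ln (1 + x) - x) * real (card S) / real m)"
      unfolding U_def F_def using tail_upper[OF fin S i x(1)] .
    also have "\<dots> \<le> real m ^ card V * exp (- cc x * real (card S) / real m)"
    proof -
      have "cc x * real (card S) \<le> ((1 + x) * ln (1 + x) - x) * real (card S)"
        unfolding cc_def by (intro mult_right_mono) auto
      then have "- ((1 + x) * ln (1 + x) - x) * real (card S) \<le> - cc x * real (card S)" by linarith
      then have "- ((1 + x) * ln (1 + x) - x) * real (card S) / real m \<le> - cc x * real (card S) / real m"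
        using m by (intro divide_right_mono) auto
      then show ?thesis by (intro mult_left_mono) auto
    qed
    finally have u: "real (card (U i)) \<le> real m ^ card V * exp (- cc x * s0 / real m)"
      using ex by (meson mult_left_mono order_trans of_nat_0_le_iff zero_le_power)
    have "real (card (L i)) \<le> real m ^ card V * exp (- (x + (1 - x) * ln (1 - x)) * real (card S) / real m)"
      unfolding L_def F_def using tail_lower[OF fin S i x] .
    also have "\<dots> \<le> real m ^ card V * exp (- cc x * real (card S) / real m)"
    proof -
      have "cc x * real (card S) \<le> (x + (1 - x) * ln (1 - x)) * real (card S)"
        unfolding cc_def by (intro mult_right_mono) auto
      then have "- (x + (1 - x) * ln (1 - x)) * real (card S) \<le> - cc x * real (card S)" by linarith
      then have "- (x + (1 - x) * ln (1 - x)) * real (card S) / real m \<le> - cc x * real (card S) / real m"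
        using m by (intro divide_right_mono) auto
      then show ?thesis by (intro mult_left_mono) auto
    qed
    finally have l: "real (card (L i)) \<le> real m ^ card V * exp (- cc x * s0 / real m)"
      using ex by (meson mult_left_mono order_trans of_nat_0_le_iff zero_le_power)
    have "card (U i \<union> L i) \<le> card (U i) + card (L i)" by (rule card_Un_le)
    then show ?thesis using u l by linarith
  qed
  have "card {f\<in>F. badv m x f S} \<le> card (\<Union>i<m. U i \<union> L i)"
    using sub fF unfolding U_def L_def by (intro card_mono) auto
  also have "\<dots> \<le> (\<Sum>i<m. card (U i \<union> L i))" by (rule card_UN_le) simp
  finally have "real (card {f\<in>F. badv m x f S}) \<le> (\<Sum>i<m. real (card (U i \<union> L i)))"
    by (metis of_nat_le_iff of_nat_sum)
  also have "\<dots> \<le> (\<Sum>i<m. 2 * (real m ^ card V * exp (- cc x * s0 / real m)))"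
    using bi by (intro sum_mono) auto
  also have "\<dots> = real m ^ card V * (2 * real m * exp (- cc x * s0 / real m))" by simp
  finally show ?thesis unfolding F_def .
qed

lemma exists_good:
  fixes V Vg :: "'a set" and Sv :: "'a \<Rightarrow> 'a set" and m :: nat and x s0 :: real
  assumes fin: "finite V" "finite Vg" and S: "\<And>v. v \<in> Vg \<Longrightarrow> Sv v \<subseteq> V" and m: "m \<ge> 1" and x: "0 < x" "x < 1"
    and s0: "\<And>v. v \<in> Vg \<Longrightarrow> s0 \<le> real (card (Sv v))"
  shows "\<exists>f\<in>PiE V (\<lambda>_. {..<m}). real (card {v\<in>Vg. badv m x f (Sv v)})
            \<le> real (card Vg) * (2 * real m * exp (- cc x * s0 / real m))"
proof (rule ccontr)
  define F where "F = PiE V (\<lambda>_. {..<m})"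
  define \<delta> where "\<delta> = 2 * real m * exp (- cc x * s0 / real m)"
  assume "\<not> ?thesis"
  then have gt: "\<forall>f\<in>F. real (card Vg) * \<delta> < real (card {v\<in>Vg. badv m x f (Sv v)})"
    unfolding F_def \<delta>_def by auto
  have fF: "finite F" unfolding F_def using fin by (simp add: finite_PiE)
  have cF: "card F = m ^ card V" unfolding F_def using fin by (simp add: card_PiE)
  have "0 \<in> {..<m}" using m by simp
  then have "F \<noteq> {}" unfolding F_def by (auto simp: PiE_eq_empty_iff)
  then have "(\<Sum>f\<in>F. real (card Vg) * \<delta>) < (\<Sum>f\<in>F. real (card {v\<in>Vg. badv m x f (Sv v)}))"
    using fF gt by (intro sum_strict_mono) auto
  also have "\<dots> = real (\<Sum>f\<in>F. card {v\<in>Vg. badv m x f (Sv v)})" by simp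
  also have "(\<Sum>f\<in>F. card {v\<in>Vg. badv m x f (Sv v)}) = (\<Sum>v\<in>Vg. card {f\<in>F. badv m x f (Sv v)})"
    using double_count[OF fF fin(2)] .
  also have "real \<dots> = (\<Sum>v\<in>Vg. real (card {f\<in>F. badv m x f (Sv v)}))" by simp
  also have "\<dots> \<le> (\<Sum>v\<in>Vg. real m ^ card V * \<delta>)"
    unfolding F_def \<delta>_def using bad_one[OF fin(1) S m x s0] by (intro sum_mono) auto
  also have "\<dots> = (\<Sum>f\<in>F. real (card Vg) * \<delta>)" using cF by simp
  finally show False by simp
qed

fun pth :: "(nat \<Rightarrow> 'a \<Rightarrow> 'a) \<Rightarrow> 'a \<Rightarrow> nat \<Rightarrow> 'a" where
  "pth g v 0 = v"
| "pth g v (Suc j) = g j (pth g v j)"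

locale chainsetup =
  fixes P A :: "nat \<Rightarrow> 'a set" and g :: "nat \<Rightarrow> 'a \<Rightarrow> 'a" and E :: "'a \<Rightarrow> 'a \<Rightarrow> bool"
  assumes disj: "\<And>i j. i \<noteq> j \<Longrightarrow> P i \<inter> P j = {}"
    and AP: "\<And>i. A i \<subseteq> P i"
    and ginj: "\<And>i. inj_on (g i) (A i)"
    and gmap: "\<And>i x. x \<in> A i \<Longrightarrow> g i x \<in> P (Suc i) \<and> E x (g i x)"
    and finP: "\<And>i. finite (P i)"
begin

definition G :: "nat \<Rightarrow> 'a set" where
  "G j = {v\<in>P 0. \<forall>i<j. pth g v i \<in> A i}"

lemma pth_in: "v \<in> P 0 \<Longrightarrow> \<forall>i<j. pth g v i \<in> A i \<Longrightarrow> pth g v j \<in> P j"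
proof (induction j)
  case 0 then show ?case by simp
next
  case (Suc j)
  then have "pth g v j \<in> A j" by auto
  then show ?case using gmap by simp
qed

lemma G_mono: "i \<le> j \<Longrightarrow> G j \<subseteq> G i"
  unfolding G_def by auto

lemma G_inj: "inj_on (\<lambda>v. pth g v j) (G j)"
proof (induction j)
  case 0 then show ?case by (simp add: inj_on_def)
next
  case (Suc j)
  show ?case unfolding inj_on_def
  proof (intro ballI impI)
    fix v w assume v: "v \<in> G (Suc j)" and w: "w \<in> G (Suc j)" and eq: "pth g v (Suc j) = pth g w (Suc j)"
    have vA: "pth g v j \<in> A j" and wA: "pth g w j \<in> A j" using v w unfolding G_def by auto
    have "pth g v j = pth g w j" using eq ginj[of j] vA wA unfolding inj_on_def by auto
    moreover have "v \<in> G j" "w \<in> G j" using v w G_mono[of j "Suc j"] by auto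
    ultimately show "v = w" using Suc.IH unfolding inj_on_def by blast
  qed
qed

lemma G_card: "card (P 0) \<le> card (G j) + (\<Sum>i<j. card (P i - A i))"
proof (induction j)
  case 0
  have "G 0 = P 0" unfolding G_def by auto
  then show ?case by simp
next
  case (Suc j)
  have fG: "finite (G j)" unfolding G_def using finP by auto
  have sub: "G (Suc j) \<subseteq> G j" using G_mono by auto
  have "(\<lambda>v. pth g v j) ` (G j - G (Suc j)) \<subseteq> P j - A j"
  proof
    fix y assume "y \<in> (\<lambda>v. pth g v j) ` (G j - G (Suc j))"
    then obtain v where v: "v \<in> G j" "v \<notin> G (Suc j)" "y = pth g v j" by auto
    have "pth g v j \<in> P j" using v(1) pth_in unfolding G_def by auto
    moreover have "pth g v j \<notin> A j" using v(1,2) unfolding G_def using less_Suc_eq by auto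
    ultimately show "y \<in> P j - A j" using v by auto
  qed
  moreover have "inj_on (\<lambda>v. pth g v j) (G j - G (Suc j))"
    using G_inj[of j] by (meson Diff_subset inj_on_subset)
  moreover have "finite (P j - A j)" using finP by auto
  ultimately have c1: "card (G j - G (Suc j)) \<le> card (P j - A j)"
    by (metis card_image card_mono)
  have "card (G j) = card (G (Suc j)) + card (G j - G (Suc j))"
    using fG sub by (metis card_Diff_subset card_mono finite_subset le_add_diff_inverse)
  then show ?case using Suc.IH c1 by simp
qed

lemma pth_in_G: "v \<in> G (m - 1) \<Longrightarrow> i < m \<Longrightarrow> pth g v i \<in> P i"
  using pth_in[of v i] unfolding G_def by auto

lemma paths:
  assumes m: "m \<ge> 1" and W: "\<forall>i<m. P i \<subseteq> W" and v: "v \<in> G (m - 1)"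
  shows "is_path_in E W (map (pth g v) [0..<m]) \<and> length (map (pth g v) [0..<m]) = m
     \<and> hd (map (pth g v) [0..<m]) \<in> P 0 \<and> last (map (pth g v) [0..<m]) \<in> P (m - 1)"
proof -
  let ?p = "map (pth g v) [0..<m]"
  have inP: "\<And>i. i < m \<Longrightarrow> pth g v i \<in> P i" using pth_in_G v by auto
  have "inj_on (pth g v) {0..<m}"
  proof (rule inj_onI)
    fix i j assume "i \<in> {0..<m}" "j \<in> {0..<m}" "pth g v i = pth g v j"
    then have "pth g v i \<in> P i \<inter> P j" using inP by (metis IntI atLeastLessThan_iff)
    then show "i = j" using disj by blast
  qed
  then have dist: "distinct ?p" by (simp add: distinct_map)
  have sub: "set ?p \<subseteq> W" using inP W by fastforce
  have edges: "\<forall>i. i + 1 < length ?p \<longrightarrow> E (?p ! i) (?p ! (i + 1))"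
  proof (intro allI impI)
    fix i assume i: "i + 1 < length ?p"
    then have "i < m - 1" by simp
    then have "pth g v i \<in> A i" using v unfolding G_def by auto
    then have "E (pth g v i) (g i (pth g v i))" using gmap by auto
    then show "E (?p ! i) (?p ! (i + 1))" using i by simp
  qed
  have ne: "?p \<noteq> []" using m by simp
  have "hd ?p = pth g v 0" using m by (simp add: hd_map)
  moreover have "last ?p = pth g v (m - 1)" using m by (simp add: last_map)
  moreover have "pth g v 0 \<in> P 0" "pth g v (m - 1) \<in> P (m - 1)" using inP[of 0] inP[of "m - 1"] m by auto
  ultimately show ?thesis using dist sub edges ne unfolding is_path_in_def by simp
qed

lemma paths_disj:
  assumes v: "v \<in> G (m - 1)" and w: "w \<in> G (m - 1)" and vw: "v \<noteq> w"
  shows "set (map (pth g v) [0..<m]) \<inter> set (map (pth g w) [0..<m]) = {}"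
proof (rule ccontr)
  assume "set (map (pth g v) [0..<m]) \<inter> set (map (pth g w) [0..<m]) \<noteq> {}"
  then obtain i j where ij: "i < m" "j < m" "pth g v i = pth g w j" by auto
  then have "pth g v i \<in> P i \<inter> P j" using pth_in_G v w by (metis IntI)
  then have "i = j" using disj by blast
  moreover have "i \<le> m - 1" using ij by auto
  then have "v \<in> G i" "w \<in> G i" using v w G_mono[of i "m - 1"] by auto
  ultimately show False using G_inj[of i] ij vw unfolding inj_on_def by auto
qed

end

lemma arith_final:
  fixes M x \<epsilon> Nr nr Rr Br V0r P0r Sr t :: real
  assumes M: "M \<ge> 1" and x: "0 < x" "x \<le> 1/16" and eps: "0 < \<epsilon>"
    and pos: "Nr \<ge> 0" "Rr \<ge> 0" "Br \<ge> 0"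
    and F1: "P0r \<le> Sr + M * (4 * x * Nr + 2 * M * Rr + 1)"
    and F2: "V0r \<le> P0r + Rr"
    and F3: "(Nr - Br) * (1 - 3 * x) \<le> M * V0r"
    and F4: "Br \<le> Rr"
    and F5: "M * t \<le> (1 - \<epsilon> + 2 * x) * Nr + M"
    and F6: "(2 * M ^ 3 + 2 * M) * Rr \<le> nr * \<epsilon> / 16"
    and F7: "M ^ 2 + M \<le> nr * \<epsilon> / 16"
    and F8: "nr \<le> 4 * Nr"
    and F9: "x * (5 + 4 * M ^ 2) \<le> \<epsilon> / 2"
  shows "t \<le> Sr"
proof -
  have a1: "M * P0r \<le> M * Sr + M * M * (4 * x * Nr + 2 * M * Rr + 1)"
    using mult_left_mono[OF F1, of M] M by (simp add: algebra_simps)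
  have a2: "M * V0r \<le> M * P0r + M * Rr" using mult_left_mono[OF F2, of M] M by (simp add: algebra_simps)
  have a3: "Br * (1 - 3 * x) \<le> Br" using pos x by (simp add: mult_left_le)
  have a4: "x * (5 + 4 * M ^ 2) * Nr \<le> \<epsilon> / 2 * Nr" using mult_right_mono[OF F9 pos(1)] .
  have a5: "Rr \<le> M * Rr" using M pos by (simp add: mult_le_cancel_right1)
  have a6: "\<epsilon> * nr \<le> \<epsilon> * (4 * Nr)" using F8 eps by simp
  have "M * t \<le> M * Sr"
  proof -
    have "M * t \<le> (1 - \<epsilon> + 2 * x) * Nr + M" by (rule F5)
    also have "\<dots> \<le> M * Sr" 
      using a1 a2 a3 a4 a5 a6 F3 F4 F6 F7 by (simp add: algebra_simps power2_eq_square power3_eq_cube)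
    finally show ?thesis .
  qed
  then show ?thesis using M by simp
qed

lemma dG_mono: "finite Y \<Longrightarrow> X \<subseteq> Y \<Longrightarrow> dG E v X \<le> dG E v Y"
  unfolding dG_def by (intro card_mono) auto

lemma core:
  fixes m :: nat and \<epsilon> x \<gamma> q d :: real and Vg V :: "nat set" and E :: "nat \<Rightarrow> nat \<Rightarrow> bool"
  assumes m: "m \<ge> 1" and eps: "0 < \<epsilon>" "\<epsilon> \<le> 1"
    and xdef: "x = \<epsilon> / (8 * (real m ^ 2 + 2))"
    and gam: "0 < \<gamma>" "\<gamma> \<le> x" and q: "q \<ge> 1/2" and d1: "d \<ge> 1"
    and d2: "d \<ge> 64 * (real m ^ 2 + real m) / \<epsilon>"
    and d3: "(2 * real m ^ 3 + 2 * real m) * (1 + d) * (2 * real m * exp (- cc x * (d / 4) / real m)) \<le> \<epsilon> / 16"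
    and G: "simple_graph Vg E" and Gd: "\<forall>v\<in>Vg. real (dG E v Vg) \<le> d" and VV: "V \<subseteq> Vg"
    and GN: "pm_approx (real (card V)) \<gamma> (q * real (card Vg))"
    and Gs: "\<forall>v\<in>Vg. pm_approx (real (dG E v V)) \<gamma> (q * d)"
  shows "\<exists>Ps::nat list list. length Ps = nat \<lceil>(1 - \<epsilon>) * q * real (card Vg) / real m\<rceil>
                 \<and> (\<forall>P\<in>set Ps. is_path_in E V P \<and> length P = m)
                 \<and> (\<forall>i<nat \<lceil>(1 - \<epsilon>) * q * real (card Vg) / real m\<rceil>. \<forall>j<nat \<lceil>(1 - \<epsilon>) * q * real (card Vg) / real m\<rceil>. i \<noteq> j \<longrightarrow> set (Ps ! i) \<inter> set (Ps ! j) = {})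
                 \<and> (\<forall>v\<in>Vg. real (dG E v ((\<lambda>P. hd P) ` set Ps \<union> (\<lambda>P. last P) ` set Ps))
                              \<le> 4 * d / real m)"
proof -
  define n where "n = card Vg"
  define N where "N = card V"
  define t where "t = nat \<lceil>(1 - \<epsilon>) * q * real n / real m\<rceil>"
  have finVg: "finite Vg" using G unfolding simple_graph_def by auto
  have finV: "finite V" using finVg VV finite_subset by blast
  have sym: "\<And>u v. E u v \<Longrightarrow> E v u" using G unfolding simple_graph_def by auto
  have Ein: "\<And>u v. E u v \<Longrightarrow> u \<in> Vg \<and> v \<in> Vg" using G unfolding simple_graph_def by auto
  show ?thesis
  proof (cases "n = 0")
    case True
    then have "Vg = {}" using finVg unfolding n_def by simp
    moreover have "t = 0" unfolding t_def using True by simp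
    ultimately show ?thesis unfolding t_def n_def by (intro exI[of _ "[]"]) simp
  next
    case False
    then have n0: "n > 0" by simp
    have m0: "real m \<ge> 1" using m by simp
    have den: "8 * (real m ^ 2 + 2) > 0" by (simp add: add_nonneg_pos)
    have x0: "0 < x" unfolding xdef using eps den by (intro divide_pos_pos) auto
    have x16: "x \<le> 1/16"
    proof -
      have "x \<le> 1 / (8 * (real m ^ 2 + 2))" unfolding xdef using eps den by (intro divide_right_mono) auto
      also have "\<dots> \<le> 1 / 16" using den by (intro divide_left_mono) auto
      finally show ?thesis .
    qed
    have g16: "\<gamma> \<le> 1/16" using gam x16 by simp
    have d0: "d \<ge> 0" using d1 by simp
    define Sv where "Sv = (\<lambda>v. {u\<in>V. E v u})"
    have SvV: "\<And>v. Sv v \<subseteq> V" unfolding Sv_def by auto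
    have dGS: "\<And>v. dG E v V = card (Sv v)" unfolding dG_def Sv_def by simp
    have sl: "\<And>v. v \<in> Vg \<Longrightarrow> (1 - \<gamma>) * (q * d) \<le> real (card (Sv v))"
      using Gs unfolding pm_approx_def dGS by auto
    have su: "\<And>v. v \<in> Vg \<Longrightarrow> real (card (Sv v)) \<le> (1 + \<gamma>) * (q * d)"
      using Gs unfolding pm_approx_def dGS by auto
    have gq: "1/4 \<le> (1 - \<gamma>) * q"
    proof -
      have "(15/16) * (1/2) \<le> (1 - \<gamma>) * q" by (rule mult_mono) (use g16 q in auto)
      then show ?thesis by simp
    qed
    have qd4: "d / 4 \<le> (1 - \<gamma>) * (q * d)"
    proof -
      have "(1/4) * d \<le> ((1 - \<gamma>) * q) * d" using gq d0 by (rule mult_right_mono)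
      then show ?thesis by (simp add: mult_ac)
    qed
    have s4: "\<And>v. v \<in> Vg \<Longrightarrow> d / 4 \<le> real (card (Sv v))" using sl qd4 by fastforce
    have Nn: "N \<le> n" unfolding N_def n_def using finVg VV by (simp add: card_mono)
    have NL: "(1 - \<gamma>) * (q * real n) \<le> real N" using GN unfolding pm_approx_def N_def n_def by simp
    have q1: "q * (1 - \<gamma>) \<le> 1"
    proof -
      have "(1 - \<gamma>) * q * real n \<le> 1 * real n" using NL Nn by simp
      then show ?thesis using n0 by (simp add: mult_ac)
    qed
    have N4: "real n / 4 \<le> real N"
    proof -
      have h: "(1/4) * real n \<le> ((1 - \<gamma>) * q) * real n" using gq by (rule mult_right_mono) simp
      have e: "((1 - \<gamma>) * q) * real n = (1 - \<gamma>) * (q * real n)" by (simp add: mult.assoc)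
      show ?thesis using NL h e by linarith
    qed
    obtain v0 where v0: "v0 \<in> Vg" using n0 unfolding n_def by (metis card.empty equals0I less_irrefl)
    have nd: "d / 4 \<le> real n"
    proof -
      have "card (Sv v0) \<le> N" unfolding N_def using finV SvV by (simp add: card_mono)
      then show ?thesis using s4[OF v0] Nn by linarith
    qed
    define \<delta> where "\<delta> = 2 * real m * exp (- cc x * (d / 4) / real m)"
    have del0: "\<delta> \<ge> 0" unfolding \<delta>_def by simp
    have "x < 1" using x16 by simp
    have "\<exists>f\<in>PiE V (\<lambda>_. {..<m}). real (card {v\<in>Vg. badv m x f (Sv v)})
            \<le> real (card Vg) * (2 * real m * exp (- cc x * (d / 4) / real m))"
      by (rule exists_good[OF finV finVg _ m x0 \<open>x < 1\<close>]) (use SvV s4 in auto)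
    then obtain f where f: "f \<in> PiE V (\<lambda>_. {..<m})"
      and fB: "real (card {v\<in>Vg. badv m x f (Sv v)}) \<le> real (card Vg) * \<delta>"
      unfolding \<delta>_def by blast
    define B where "B = {v\<in>Vg. badv m x f (Sv v)}"
    have finB: "finite B" unfolding B_def using finVg by simp
    have Bn: "real (card B) \<le> real n * \<delta>" using fB unfolding B_def n_def by simp
    have good: "\<And>v i. v \<in> Vg \<Longrightarrow> v \<notin> B \<Longrightarrow> i < m \<Longrightarrow>
        (1 - x) * real (card (Sv v)) / real m \<le> real (card {u\<in>Sv v. f u = i})
        \<and> real (card {u\<in>Sv v. f u = i}) \<le> (1 + x) * real (card (Sv v)) / real m"
    proof -
      fix v i assume a: "v \<in> Vg" "v \<notin> B" "i < m"
      then have nb: "\<not> badv m x f (Sv v)" unfolding B_def by auto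
      from nb a(3) show "(1 - x) * real (card (Sv v)) / real m \<le> real (card {u\<in>Sv v. f u = i})
        \<and> real (card {u\<in>Sv v. f u = i}) \<le> (1 + x) * real (card (Sv v)) / real m"
        unfolding badv_def by (meson not_less)
    qed
    define R where "R = B \<union> (\<Union>b\<in>B. Sv b)"
    have RVg: "R \<subseteq> Vg" unfolding R_def B_def using SvV VV by auto
    have finR: "finite R" using RVg finVg finite_subset by blast
    have Rcard: "real (card R) \<le> (1 + d) * real (card B)"
    proof -
      have c1: "card R \<le> card B + card (\<Union>b\<in>B. Sv b)" unfolding R_def by (rule card_Un_le)
      have c2: "card (\<Union>b\<in>B. Sv b) \<le> (\<Sum>b\<in>B. card (Sv b))" by (rule card_UN_le[OF finB])
      from c1 c2 have "card R \<le> card B + (\<Sum>b\<in>B. card (Sv b))" by linarith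
      then have "real (card R) \<le> real (card B + (\<Sum>b\<in>B. card (Sv b)))" by (simp only: of_nat_le_iff)
      then have "real (card R) \<le> real (card B) + (\<Sum>b\<in>B. real (card (Sv b)))" by simp
      also have "(\<Sum>b\<in>B. real (card (Sv b))) \<le> (\<Sum>b\<in>B. d)"
      proof (intro sum_mono)
        fix b assume b: "b \<in> B"
        then have "b \<in> Vg" unfolding B_def by auto
        have "card (Sv b) = dG E b V" using dGS by simp
        also have "\<dots> \<le> dG E b Vg" using dG_mono[OF finVg VV] .
        finally show "real (card (Sv b)) \<le> d" using Gd \<open>b \<in> Vg\<close> by (meson of_nat_le_iff order_trans)
      qed
      finally show ?thesis by (simp add: algebra_simps)
    qed
    have Rn: "real (card R) \<le> (1 + d) * real n * \<delta>"
    proof -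
      have "(1 + d) * real (card B) \<le> (1 + d) * (real n * \<delta>)" using Bn d0 by (intro mult_left_mono) auto
      then show ?thesis using Rcard by (simp add: mult_ac)
    qed
    define W where "W = V - R"
    define P where "P = (\<lambda>i. {u\<in>W. f u = i})"
    have PW: "\<And>i. P i \<subseteq> W" unfolding P_def by auto
    have WV: "W \<subseteq> V" unfolding W_def by auto
    have finP: "\<And>i. finite (P i)" unfolding P_def W_def using finV by auto
    have Pdisj: "\<And>i j. i \<noteq> j \<Longrightarrow> P i \<inter> P j = {}" unfolding P_def by auto
    have PN: "\<And>i. card (P i) \<le> N" unfolding N_def using PW WV finV by (meson card_mono subset_trans)
    have Wgood: "\<And>u. u \<in> W \<Longrightarrow> u \<in> Vg \<and> u \<notin> B" unfolding W_def R_def using VV by auto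
    have WnoB: "\<And>u b. u \<in> W \<Longrightarrow> b \<in> B \<Longrightarrow> \<not> E b u" unfolding W_def R_def Sv_def by auto
    define \<Delta> where "\<Delta> = (1 + x) * (1 + \<gamma>) * (q * d) / real m"
    define L where "L = (1 - x) * (1 - \<gamma>) * (q * d) / real m"
    have qdpos: "q * d > 0" using q d1 by simp
    have Dpos: "\<Delta> > 0" unfolding \<Delta>_def using x0 gam qdpos m0 by simp
    have upper: "\<And>v i. v \<in> Vg \<Longrightarrow> v \<notin> B \<Longrightarrow> i < m \<Longrightarrow> real (card {u\<in>Sv v. f u = i}) \<le> \<Delta>"
    proof -
      fix v i assume a: "v \<in> Vg" "v \<notin> B" "i < m"
      have "real (card {u\<in>Sv v. f u = i}) \<le> (1 + x) * real (card (Sv v)) / real m" using good[OF a] by simp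
      also have "\<dots> \<le> (1 + x) * ((1 + \<gamma>) * (q * d)) / real m"
        using su[OF a(1)] x0 m0 by (intro divide_right_mono mult_left_mono) auto
      finally show "real (card {u\<in>Sv v. f u = i}) \<le> \<Delta>" unfolding \<Delta>_def by (simp add: mult_ac)
    qed
    have lower: "\<And>v i. v \<in> Vg \<Longrightarrow> v \<notin> B \<Longrightarrow> i < m \<Longrightarrow> L \<le> real (card {u\<in>Sv v. f u = i})"
    proof -
      fix v i assume a: "v \<in> Vg" "v \<notin> B" "i < m"
      have "(1 - x) * ((1 - \<gamma>) * (q * d)) / real m \<le> (1 - x) * real (card (Sv v)) / real m"
        using sl[OF a(1)] x16 m0 by (intro divide_right_mono mult_left_mono) auto
      also have "\<dots> \<le> real (card {u\<in>Sv v. f u = i})" using good[OF a] by simp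
      finally show "L \<le> real (card {u\<in>Sv v. f u = i})" unfolding L_def by (simp add: mult_ac)
    qed
    have match: "\<exists>A g. A \<subseteq> P i \<and> inj_on g A \<and> (\<forall>y\<in>A. g y \<in> P (Suc i) \<and> E y (g y))
        \<and> (Suc i < m \<longrightarrow> real (card (P i - A)) \<le> 4 * x * real N + 2 * real m * real (card R) + 1)" for i
    proof (cases "Suc i < m")
      case False
      then show ?thesis by (intro exI[of _ "{}"]) auto
    next
      case True
      have dx: "\<forall>y\<in>P i. real (card {z\<in>P (Suc i). E y z}) \<le> \<Delta>"
      proof
        fix y assume y: "y \<in> P i"
        then have yg: "y \<in> Vg" "y \<notin> B" using Wgood PW by auto
        have "card {z\<in>P (Suc i). E y z} \<le> card {u\<in>Sv y. f u = Suc i}"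
          using finV unfolding P_def Sv_def W_def by (intro card_mono) auto
        then show "real (card {z\<in>P (Suc i). E y z}) \<le> \<Delta>" using upper[OF yg True] by linarith
      qed
      have dy: "\<forall>z\<in>P (Suc i). real (card {y\<in>P i. E y z}) \<le> \<Delta>"
      proof
        fix z assume z: "z \<in> P (Suc i)"
        then have zg: "z \<in> Vg" "z \<notin> B" using Wgood PW by auto
        have "card {y\<in>P i. E y z} \<le> card {u\<in>Sv z. f u = i}"
          using finV sym unfolding P_def Sv_def W_def by (intro card_mono) auto
        moreover have "i < m" using True by simp
        ultimately show "real (card {y\<in>P i. E y z}) \<le> \<Delta>" using upper[OF zg] by fastforce
      qed
      obtain A g where A: "A \<subseteq> P i" "inj_on g A" "\<forall>y\<in>A. g y \<in> P (Suc i) \<and> E y (g y)"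
        and Ab: "real (card (P i - A)) \<le> real (card (P i)) - (\<Sum>y\<in>P i. real (card {z\<in>P (Suc i). E y z})) / \<Delta> + 1"
        using matching_deg[OF finP finP Dpos dx dy] by blast
      define p where "p = real (card (P i))"
      have e1: "(\<Sum>y\<in>P i. real (card {z\<in>P (Suc i). E y z})) \<ge> p * L - d * real (card R)"
      proof -
        have "(\<Sum>y\<in>P i. real (card {z\<in>P (Suc i). E y z})) \<ge> (\<Sum>y\<in>P i. L - real (card {z\<in>R. E y z}))"
        proof (intro sum_mono)
          fix y assume y: "y \<in> P i"
          then have yg: "y \<in> Vg" "y \<notin> B" using Wgood PW by auto
          have "{u\<in>Sv y. f u = Suc i} \<subseteq> {z\<in>P (Suc i). E y z} \<union> {z\<in>R. E y z}"
            unfolding Sv_def P_def W_def by auto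
          then have "card {u\<in>Sv y. f u = Suc i} \<le> card ({z\<in>P (Suc i). E y z} \<union> {z\<in>R. E y z})"
            using finP finR by (intro card_mono) auto
          also have "\<dots> \<le> card {z\<in>P (Suc i). E y z} + card {z\<in>R. E y z}" by (rule card_Un_le)
          finally show "L - real (card {z\<in>R. E y z}) \<le> real (card {z\<in>P (Suc i). E y z})"
            using lower[OF yg True] by linarith
        qed
        moreover have "(\<Sum>y\<in>P i. L - real (card {z\<in>R. E y z})) = p * L - (\<Sum>y\<in>P i. real (card {z\<in>R. E y z}))"
          unfolding p_def by (simp add: sum_subtractf)
        moreover have "(\<Sum>y\<in>P i. real (card {z\<in>R. E y z})) \<le> d * real (card R)"
        proof -
          have "(\<Sum>y\<in>P i. card {z\<in>R. E y z}) = (\<Sum>z\<in>R. card {y\<in>P i. E y z})"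
            by (rule double_count[OF finP finR])
          then have "(\<Sum>y\<in>P i. real (card {z\<in>R. E y z})) = (\<Sum>z\<in>R. real (card {y\<in>P i. E y z}))"
            by (metis (no_types, lifting) of_nat_sum sum.cong)
          also have "\<dots> \<le> (\<Sum>z\<in>R. d)"
          proof (intro sum_mono)
            fix z assume "z \<in> R"
            then have zV: "z \<in> Vg" using RVg by auto
            have "card {y\<in>P i. E y z} \<le> dG E z Vg"
              unfolding dG_def using finVg PW WV VV sym by (intro card_mono) auto
            then show "real (card {y\<in>P i. E y z}) \<le> d" using Gd zV by (meson of_nat_le_iff order_trans)
          qed
          finally show ?thesis by (simp add: mult.commute)
        qed
        ultimately show ?thesis by linarith
      qed
      have "real (card (P i - A)) \<le> p - (p * L - d * real (card R)) / \<Delta> + 1"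
      proof -
        have "(p * L - d * real (card R)) / \<Delta> \<le> (\<Sum>y\<in>P i. real (card {z\<in>P (Suc i). E y z})) / \<Delta>"
          using e1 Dpos by (intro divide_right_mono) auto
        then show ?thesis using Ab unfolding p_def by linarith
      qed
      also have "\<dots> = p * (1 - L / \<Delta>) + (d / \<Delta>) * real (card R) + 1"
        using Dpos by (simp add: field_simps)
      also have "\<dots> \<le> p * (4 * x) + (2 * real m) * real (card R) + 1"
      proof -
        have LD: "L / \<Delta> = ((1 - x) * (1 - \<gamma>)) / ((1 + x) * (1 + \<gamma>))"
        proof -
          define K where "K = q * d / real m"
          have K0: "K \<noteq> 0" unfolding K_def using q d1 m0 by simp
          have "L = ((1 - x) * (1 - \<gamma>)) * K" unfolding L_def K_def by simp
          moreover have "\<Delta> = ((1 + x) * (1 + \<gamma>)) * K" unfolding \<Delta>_def K_def by simp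
          ultimately show ?thesis using K0 by simp
        qed
        have "(1 - 4 * x) * ((1 + x) * (1 + \<gamma>)) \<le> (1 - x) * (1 - \<gamma>)"
        proof -
          have "(1 - x) * (1 - \<gamma>) - (1 - 4 * x) * ((1 + x) * (1 + \<gamma>))
              = 2 * (x - \<gamma>) + 4 * x * x + 4 * x * \<gamma> + 4 * x * x * \<gamma>" by (simp add: algebra_simps)
          moreover have "0 \<le> 2 * (x - \<gamma>) + 4 * x * x + 4 * x * \<gamma> + 4 * x * x * \<gamma>"
            using x0 gam by (simp add: add_nonneg_nonneg)
          ultimately show ?thesis by linarith
        qed
        then have "1 - 4 * x \<le> L / \<Delta>" unfolding LD using x0 gam by (simp add: le_divide_eq)
        then have a1: "p * (1 - L / \<Delta>) \<le> p * (4 * x)" unfolding p_def by (intro mult_left_mono) auto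
        have "d / \<Delta> = real m / ((1 + x) * (1 + \<gamma>) * q)"
        proof -
          define C where "C = (1 + x) * (1 + \<gamma>) * q"
          have C0: "C \<noteq> 0" unfolding C_def using x0 gam q by simp
          have dn: "d \<noteq> 0" using d1 by simp
          have "\<Delta> = C * d / real m" unfolding \<Delta>_def C_def by (simp add: mult.assoc)
          then have "d / \<Delta> = d * real m / (C * d)" by simp
          also have "\<dots> = real m / C" using dn C0 by simp
          finally show ?thesis unfolding C_def .
        qed
        also have "\<dots> \<le> 2 * real m"
        proof -
          have "1 \<le> (1 + x) * (1 + \<gamma>)" using x0 gam by (simp add: algebra_simps)
          then have "1 * (1/2) \<le> (1 + x) * (1 + \<gamma>) * q" using q by (intro mult_mono) auto
          then have h: "1/2 \<le> (1 + x) * (1 + \<gamma>) * q" by simp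
          have "real m / ((1 + x) * (1 + \<gamma>) * q) \<le> real m / (1/2)"
            using h m0 by (intro divide_left_mono) auto
          then show ?thesis by simp
        qed
        finally have "(d / \<Delta>) * real (card R) \<le> (2 * real m) * real (card R)" by (intro mult_right_mono) auto
        then show ?thesis using a1 by linarith
      qed
      also have "\<dots> \<le> 4 * x * real N + 2 * real m * real (card R) + 1"
        using PN[of i] x0 unfolding p_def by (simp add: mult_left_mono)
      finally show ?thesis using A by blast
    qed
    then obtain A g where Ag: "\<And>i. A i \<subseteq> P i" "\<And>i. inj_on (g i) (A i)"
      "\<And>i. \<forall>y\<in>A i. g i y \<in> P (Suc i) \<and> E y (g i y)"
      "\<And>i. Suc i < m \<Longrightarrow> real (card (P i - A i)) \<le> 4 * x * real N + 2 * real m * real (card R) + 1"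
      by metis
    interpret cs: chainsetup P A g E
      using Pdisj Ag finP by unfold_locales auto
    define S where "S = cs.G (m - 1)"
    have SP0: "S \<subseteq> P 0" unfolding S_def cs.G_def by auto
    have finS: "finite S" using SP0 finP finite_subset by blast
    have cardG: "card (P 0) \<le> card S + (\<Sum>i<m - 1. card (P i - A i))"
      unfolding S_def by (rule cs.G_card)
    have sumb: "real (\<Sum>i<m - 1. card (P i - A i)) \<le> real m * (4 * x * real N + 2 * real m * real (card R) + 1)"
    proof -
      have "real (\<Sum>i<m - 1. card (P i - A i)) = (\<Sum>i<m - 1. real (card (P i - A i)))" by simp
      also have "\<dots> \<le> (\<Sum>i<m - 1. 4 * x * real N + 2 * real m * real (card R) + 1)"
        using Ag(4) by (intro sum_mono) auto
      also have "\<dots> = real (m - 1) * (4 * x * real N + 2 * real m * real (card R) + 1)" by simp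
      also have "\<dots> \<le> real m * (4 * x * real N + 2 * real m * real (card R) + 1)"
        using x0 by (intro mult_right_mono) auto
      finally show ?thesis .
    qed
    define V0 where "V0 = {u\<in>V. f u = 0}"
    have finV0: "finite V0" unfolding V0_def using finV by simp
    have F2: "real (card V0) \<le> real (card (P 0)) + real (card R)"
    proof -
      have "P 0 = V0 - R" unfolding P_def V0_def W_def by auto
      moreover have "card V0 - card R \<le> card (V0 - R)" by (rule diff_card_le_card_Diff[OF finR])
      ultimately have "card V0 \<le> card (P 0) + card R" by arith
      then have "real (card V0) \<le> real (card (P 0) + card R)" by (simp only: of_nat_le_iff)
      then show ?thesis by simp
    qed
    have F3: "(real N - real (card B)) * (1 - 3 * x) \<le> real m * real (card V0)"
    proof (cases "real N - real (card B) \<ge> 0")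
      case False
      then have "(real N - real (card B)) * (1 - 3 * x) \<le> 0" using x16 by (intro mult_nonpos_nonneg) auto
      moreover have "0 \<le> real m * real (card V0)" by simp
      ultimately show ?thesis by linarith
    next
      case True
      have "(\<Sum>u\<in>V0. card (Sv u)) = (\<Sum>u\<in>V0. card {v\<in>V. E u v})" unfolding Sv_def by simp
      also have "\<dots> = (\<Sum>v\<in>V. card {u\<in>V0. E u v})" by (rule double_count[OF finV0 finV])
      also have "\<dots> = (\<Sum>v\<in>V. card {u\<in>Sv v. f u = 0})"
        unfolding V0_def Sv_def using sym by (intro sum.cong refl arg_cong[where f=card]) auto
      finally have eq: "(\<Sum>u\<in>V0. real (card (Sv u))) = (\<Sum>v\<in>V. real (card {u\<in>Sv v. f u = 0}))"
        by (metis (no_types, lifting) of_nat_sum sum.cong)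
      have "(\<Sum>v\<in>V. real (card {u\<in>Sv v. f u = 0})) \<ge> (\<Sum>v\<in>V - B. real (card {u\<in>Sv v. f u = 0}))"
        using finV by (intro sum_mono2) auto
      moreover have "(\<Sum>v\<in>V - B. real (card {u\<in>Sv v. f u = 0})) \<ge> (\<Sum>v\<in>V - B. L)"
        using lower VV m by (intro sum_mono) auto
      moreover have "(\<Sum>v\<in>V - B. L) = real (card (V - B)) * L" by simp
      moreover have "real (card (V - B)) \<ge> real N - real (card B)"
        using diff_card_le_card_Diff[OF finB, of V] unfolding N_def by linarith
      moreover have L0: "L \<ge> 0" unfolding L_def using x16 g16 qdpos m0 by simp
      ultimately have low: "(real N - real (card B)) * L \<le> (\<Sum>u\<in>V0. real (card (Sv u)))"
        using eq by (smt (verit) mult_right_mono)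
      have "(\<Sum>u\<in>V0. real (card (Sv u))) \<le> (\<Sum>u\<in>V0. (1 + \<gamma>) * (q * d))"
        using su VV unfolding V0_def by (intro sum_mono) auto
      also have "\<dots> = real (card V0) * ((1 + \<gamma>) * (q * d))" by simp
      finally have up: "(real N - real (card B)) * L \<le> real (card V0) * ((1 + \<gamma>) * (q * d))" using low by linarith
      define K where "K = q * d / real m"
      have K0: "K > 0" unfolding K_def using qdpos m0 by simp
      have LK: "L = ((1 - x) * (1 - \<gamma>)) * K" unfolding L_def K_def by simp
      have qdK: "q * d = real m * K" unfolding K_def using m0 by simp
      have "((real N - real (card B)) * ((1 - x) * (1 - \<gamma>))) * K \<le> (real (card V0) * ((1 + \<gamma>) * real m)) * K"
        using up unfolding LK qdK by (simp add: mult_ac)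
      then have h1: "(real N - real (card B)) * ((1 - x) * (1 - \<gamma>)) \<le> real (card V0) * ((1 + \<gamma>) * real m)"
        using K0 by simp
      have "(1 - 3 * x) * (1 + \<gamma>) \<le> (1 - x) * (1 - \<gamma>)"
      proof -
        have "(1 - x) * (1 - \<gamma>) - (1 - 3 * x) * (1 + \<gamma>) = 2 * (x - \<gamma>) + 4 * x * \<gamma>" by (simp add: algebra_simps)
        moreover have "0 \<le> 2 * (x - \<gamma>) + 4 * x * \<gamma>" using x0 gam by simp
        ultimately show ?thesis by linarith
      qed
      then have "(real N - real (card B)) * ((1 - 3 * x) * (1 + \<gamma>)) \<le> (real N - real (card B)) * ((1 - x) * (1 - \<gamma>))"
        using True by (intro mult_left_mono) auto
      then have "((real N - real (card B)) * (1 - 3 * x)) * (1 + \<gamma>) \<le> (real m * real (card V0)) * (1 + \<gamma>)"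
        using h1 by (simp add: mult_ac)
      then show ?thesis using gam by simp
    qed
    have F4: "real (card B) \<le> real (card R)"
      using card_mono[OF finR, of B] unfolding R_def by simp
    have F5: "real m * real t \<le> (1 - \<epsilon> + 2 * x) * real N + real m"
    proof -
      define a where "a = (1 - \<epsilon>) * q * real n"
      have a0: "a \<ge> 0" unfolding a_def using eps q by simp
      have "real t \<le> a / real m + 1"
      proof -
        have ta: "t = nat \<lceil>a / real m\<rceil>" unfolding t_def a_def by simp
        have "0 \<le> a / real m" using a0 m0 by simp
        then have "0 \<le> \<lceil>a / real m\<rceil>" by simp
        then have "real t = real_of_int \<lceil>a / real m\<rceil>" unfolding ta by simp
        then show ?thesis by linarith
      qed
      then have "real m * real t \<le> real m * (a / real m + 1)" using m0 by (intro mult_left_mono) auto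
      also have "\<dots> = a + real m" using m0 by (simp add: field_simps)
      finally have t1: "real m * real t \<le> a + real m" .
      have "a * (1 - \<gamma>) \<le> (1 - \<epsilon>) * real N"
      proof -
        have "a * (1 - \<gamma>) = (1 - \<epsilon>) * ((1 - \<gamma>) * (q * real n))" unfolding a_def by (simp add: mult_ac)
        also have "\<dots> \<le> (1 - \<epsilon>) * real N" using NL eps by (intro mult_left_mono) auto
        finally show ?thesis .
      qed
      also have "\<dots> \<le> ((1 - \<epsilon> + 2 * x) * real N) * (1 - \<gamma>)"
      proof -
        have "(1 - \<epsilon>) \<le> (1 - \<epsilon> + 2 * x) * (1 - \<gamma>)"
        proof -
          have "(1 - \<epsilon> + 2 * x) * (1 - \<gamma>) = (1 - \<epsilon>) + (2 * x - \<gamma> * (1 - \<epsilon> + 2 * x))" by (simp add: algebra_simps)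
          moreover have "\<gamma> * (1 - \<epsilon> + 2 * x) \<le> x * 2"
            using gam x16 eps by (intro mult_mono) auto
          ultimately show ?thesis by linarith
        qed
        then have "(1 - \<epsilon>) * real N \<le> ((1 - \<epsilon> + 2 * x) * (1 - \<gamma>)) * real N" by (intro mult_right_mono) auto
        then show ?thesis by (simp add: mult_ac)
      qed
      finally have "a \<le> (1 - \<epsilon> + 2 * x) * real N" using g16 by simp
      then show ?thesis using t1 by linarith
    qed
    have F6: "(2 * real m ^ 3 + 2 * real m) * real (card R) \<le> real n * \<epsilon> / 16"
    proof -
      have "(2 * real m ^ 3 + 2 * real m) * real (card R) \<le> (2 * real m ^ 3 + 2 * real m) * ((1 + d) * real n * \<delta>)"
        using Rn by (intro mult_left_mono) auto
      also have "\<dots> = real n * ((2 * real m ^ 3 + 2 * real m) * (1 + d) * \<delta>)" by (simp add: mult_ac)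
      also have "\<dots> \<le> real n * (\<epsilon> / 16)" using d3 unfolding \<delta>_def by (intro mult_left_mono) auto
      finally show ?thesis by simp
    qed
    have F7: "real m ^ 2 + real m \<le> real n * \<epsilon> / 16"
    proof -
      have "64 * (real m ^ 2 + real m) / \<epsilon> \<le> 4 * real n" using d2 nd by linarith
      then have "64 * (real m ^ 2 + real m) \<le> 4 * real n * \<epsilon>" using eps by (simp add: divide_le_eq)
      then show ?thesis by simp
    qed
    have F9: "x * (5 + 4 * real m ^ 2) \<le> \<epsilon> / 2"
    proof -
      have "x * (5 + 4 * real m ^ 2) = \<epsilon> * ((5 + 4 * real m ^ 2) / (8 * (real m ^ 2 + 2)))"
        unfolding xdef by simp
      also have "\<dots> \<le> \<epsilon> * (1 / 2)"
        using den eps by (intro mult_left_mono) (auto simp: divide_le_eq)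
      finally show ?thesis by simp
    qed
    have tS: "real t \<le> real (card S)"
    proof (rule arith_final[where M = "real m" and x = x and \<epsilon> = \<epsilon> and Nr = "real N" and nr = "real n"
          and Rr = "real (card R)" and Br = "real (card B)" and V0r = "real (card V0)" and P0r = "real (card (P 0))"])
      show "real (card (P 0)) \<le> real (card S) + real m * (4 * x * real N + 2 * real m * real (card R) + 1)"
        using cardG sumb by linarith
    qed (use m0 x0 x16 eps F2 F3 F4 F5 F6 F7 N4 F9 in auto)
    define Ls where "Ls = take t (sorted_list_of_set S)"
    have Ls: "length Ls = t" "distinct Ls" "set Ls \<subseteq> S"
      unfolding Ls_def using tS finS by (auto dest: in_set_takeD)
    define pathof where "pathof = (\<lambda>v. map (pth g v) [0..<m])"
    define Ps where "Ps = map pathof Ls"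
    have PV: "\<forall>i<m. P i \<subseteq> V" using PW WV by blast
    have c2: "\<forall>Q\<in>set Ps. is_path_in E V Q \<and> length Q = m"
    proof
      fix Q assume "Q \<in> set Ps"
      then obtain v where v: "v \<in> set Ls" "Q = pathof v" unfolding Ps_def by auto
      then have "v \<in> cs.G (m - 1)" using Ls(3) unfolding S_def by auto
      then show "is_path_in E V Q \<and> length Q = m" using cs.paths[OF m PV] v unfolding pathof_def by auto
    qed
    have c3: "\<forall>i<t. \<forall>j<t. i \<noteq> j \<longrightarrow> set (Ps ! i) \<inter> set (Ps ! j) = {}"
    proof (intro allI impI)
      fix i j assume ij: "i < t" "j < t" "i \<noteq> j"
      have ne: "Ls ! i \<noteq> Ls ! j" using Ls ij nth_eq_iff_index_eq by metis
      have inS: "Ls ! i \<in> cs.G (m - 1)" "Ls ! j \<in> cs.G (m - 1)" using Ls ij nth_mem unfolding S_def by (metis subsetD)+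
      show "set (Ps ! i) \<inter> set (Ps ! j) = {}"
        using cs.paths_disj[OF inS ne] ij Ls(1) unfolding Ps_def pathof_def by simp
    qed
    have ends: "(\<lambda>Q. hd Q) ` set Ps \<union> (\<lambda>Q. last Q) ` set Ps \<subseteq> P 0 \<union> P (m - 1)"
    proof -
      have "\<forall>Q\<in>set Ps. hd Q \<in> P 0 \<and> last Q \<in> P (m - 1)"
      proof
        fix Q assume "Q \<in> set Ps"
        then obtain v where v: "v \<in> set Ls" "Q = pathof v" unfolding Ps_def by auto
        then have "v \<in> cs.G (m - 1)" using Ls(3) unfolding S_def by auto
        then show "hd Q \<in> P 0 \<and> last Q \<in> P (m - 1)" using cs.paths[OF m PV] v unfolding pathof_def by auto
      qed
      then show ?thesis by auto
    qed
    have D2: "2 * \<Delta> \<le> 4 * d / real m"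
    proof -
      have "(1 + x) * (1 + \<gamma>) \<le> 2 * (1 - \<gamma>)"
      proof -
        have "x * \<gamma> \<le> 1 * (1/16)" using x16 g16 x0 gam by (intro mult_mono) auto
        then show ?thesis using x16 g16 by (simp add: algebra_simps)
      qed
      then have "(1 + x) * (1 + \<gamma>) * q \<le> 2 * (1 - \<gamma>) * q" using q by (intro mult_right_mono) auto
      also have "\<dots> = 2 * (q * (1 - \<gamma>))" by (simp add: mult_ac)
      also have "\<dots> \<le> 2" using q1 by simp
      finally have "(1 + x) * (1 + \<gamma>) * q * d \<le> 2 * d" using d0 by (intro mult_right_mono) auto
      then have "(1 + x) * (1 + \<gamma>) * (q * d) / real m \<le> 2 * d / real m" using m0 by (simp add: divide_right_mono mult_ac)
      then show ?thesis unfolding \<Delta>_def by simp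
    qed
    have c4: "\<forall>v\<in>Vg. real (dG E v ((\<lambda>Q. hd Q) ` set Ps \<union> (\<lambda>Q. last Q) ` set Ps)) \<le> 4 * d / real m"
    proof
      fix v assume v: "v \<in> Vg"
      have finE: "finite (P 0 \<union> P (m - 1))" using finP by simp
      have st1: "dG E v ((\<lambda>Q. hd Q) ` set Ps \<union> (\<lambda>Q. last Q) ` set Ps) \<le> card {u\<in>P 0 \<union> P (m - 1). E v u}"
        unfolding dG_def using ends finE by (intro card_mono) auto
      also have "\<dots> \<le> card {u\<in>Sv v. f u = 0} + card {u\<in>Sv v. f u = m - 1}"
      proof (cases "v \<in> B")
        case True
        then have "{u\<in>P 0 \<union> P (m - 1). E v u} = {}" using WnoB PW by blast
        then show ?thesis by (simp only: card.empty)
      next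
        case False
        have "{u\<in>P 0 \<union> P (m - 1). E v u} \<subseteq> {u\<in>Sv v. f u = 0} \<union> {u\<in>Sv v. f u = m - 1}"
          unfolding P_def Sv_def W_def by auto
        then have "card {u\<in>P 0 \<union> P (m - 1). E v u} \<le> card ({u\<in>Sv v. f u = 0} \<union> {u\<in>Sv v. f u = m - 1})"
          using finV SvV by (intro card_mono) (auto intro: finite_subset)
        also have "\<dots> \<le> card {u\<in>Sv v. f u = 0} + card {u\<in>Sv v. f u = m - 1}" by (rule card_Un_le)
        finally show ?thesis .
      qed
      finally have cnt: "real (dG E v ((\<lambda>Q. hd Q) ` set Ps \<union> (\<lambda>Q. last Q) ` set Ps))
          \<le> real (card {u\<in>Sv v. f u = 0}) + real (card {u\<in>Sv v. f u = m - 1})" by linarith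
      show "real (dG E v ((\<lambda>Q. hd Q) ` set Ps \<union> (\<lambda>Q. last Q) ` set Ps)) \<le> 4 * d / real m"
      proof (cases "v \<in> B")
        case True
        have "{u\<in>P 0 \<union> P (m - 1). E v u} = {}" using WnoB PW True by blast
        then have "dG E v ((\<lambda>Q. hd Q) ` set Ps \<union> (\<lambda>Q. last Q) ` set Ps) = 0"
          using st1 by (simp only: card.empty le_zero_eq)
        then show ?thesis using d0 m0 by simp
      next
        case False
        have "real (card {u\<in>Sv v. f u = 0}) \<le> \<Delta>" using upper[OF v False] m by simp
        moreover have "real (card {u\<in>Sv v. f u = m - 1}) \<le> \<Delta>" using upper[OF v False] m by simp
        ultimately show ?thesis using cnt D2 by linarith
      qed
    qed
    have "length Ps = t" unfolding Ps_def using Ls by simp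
    then show ?thesis using c2 c3 c4 unfolding t_def n_def by blast
  qed
qed

lemma expbound:
  fixes a d :: real
  assumes a: "a > 0" and d: "d \<ge> 1"
  shows "(1 + d) * exp (- (a * d)) \<le> 8 / (a ^ 2 * d)"
proof -
  have ad: "a * d > 0" using a d by simp
  have "(1 + a * d / 2) \<le> exp (a * d / 2)" by (rule exp_ge_add_one_self)
  then have h: "a * d / 2 \<le> exp (a * d / 2)" by linarith
  have "(a * d / 2) ^ 2 \<le> exp (a * d / 2) ^ 2" using ad h by (intro power_mono) auto
  also have "exp (a * d / 2) ^ 2 = exp (a * d)" by (simp add: exp_double[symmetric] power2_eq_square mult_2[symmetric] exp_add[symmetric])
  finally have e: "(a * d) ^ 2 / 4 \<le> exp (a * d)" by (simp add: power_divide)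
  have "(1 + d) * exp (- (a * d)) = (1 + d) / exp (a * d)" by (simp add: exp_minus field_simps)
  also have "\<dots> \<le> (1 + d) / ((a * d) ^ 2 / 4)" using e ad d by (intro divide_left_mono) (auto intro!: mult_pos_pos)
  also have "\<dots> \<le> (2 * d) / ((a * d) ^ 2 / 4)" using d ad by (intro divide_right_mono) auto
  also have "\<dots> = 8 / (a ^ 2 * d)" using d by (simp add: field_simps power2_eq_square)
  finally show ?thesis .
qed

definition x_of :: "nat \<Rightarrow> real \<Rightarrow> real" where
  "x_of m \<epsilon> = \<epsilon> / (8 * (real m ^ 2 + 2))"

definition d0_of :: "nat \<Rightarrow> real \<Rightarrow> real" where
  "d0_of m \<epsilon> = max 1 (max (64 * (real m ^ 2 + real m) / \<epsilon>)
     (256 * real m * (2 * real m ^ 3 + 2 * real m) / ((cc (x_of m \<epsilon>) / (4 * real m)) ^ 2 * \<epsilon>)))"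

lemma x_of_pos: "0 < \<epsilon> \<Longrightarrow> 0 < x_of m \<epsilon>"
  unfolding x_of_def by (intro divide_pos_pos) (auto simp: add_nonneg_pos)

lemma inner:
  fixes m :: nat and \<epsilon> \<gamma> d q :: real and Vg V :: "nat set" and E :: "nat \<Rightarrow> nat \<Rightarrow> bool"
  assumes m: "m \<ge> 1" and eps: "0 < \<epsilon>" "\<epsilon> \<le> 1" and gam: "0 < \<gamma>" "\<gamma> \<le> x_of m \<epsilon>"
    and dd: "d0_of m \<epsilon> \<le> d" and q: "1/2 \<le> q"
    and H: "simple_graph Vg E \<and> (\<forall>v\<in>Vg. real (dG E v Vg) \<le> d) \<and> V \<subseteq> Vg
          \<and> pm_approx (real (card V)) \<gamma> (q * real (card Vg))
          \<and> (\<forall>v\<in>Vg. pm_approx (real (dG E v V)) \<gamma> (q * d))"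
  shows "let t = nat \<lceil>(1 - \<epsilon>) * q * real (card Vg) / real m\<rceil> in
               \<exists>Ps::nat list list. length Ps = t
                 \<and> (\<forall>P\<in>set Ps. is_path_in E V P \<and> length P = m)
                 \<and> (\<forall>i<t. \<forall>j<t. i \<noteq> j \<longrightarrow> set (Ps ! i) \<inter> set (Ps ! j) = {})
                 \<and> (\<forall>v\<in>Vg. real (dG E v ((\<lambda>P. hd P) ` set Ps \<union> (\<lambda>P. last P) ` set Ps))
                              \<le> 4 * d / real m)"
proof -
  define x where "x = x_of m \<epsilon>"
  have x_def': "x = \<epsilon> / (8 * (real m ^ 2 + 2))" unfolding x_def x_of_def ..
  have den: "8 * (real m ^ 2 + 2) > 0" by (simp add: add_nonneg_pos)
  have x0: "0 < x" unfolding x_def using x_of_pos eps by simp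
  have x16: "x \<le> 1/16"
  proof -
    have "x \<le> 1 / (8 * (real m ^ 2 + 2))" unfolding x_def' using eps den by (intro divide_right_mono) auto
    also have "\<dots> \<le> 1 / 16" using den by (intro divide_left_mono) auto
    finally show ?thesis .
  qed
  have x1: "x < 1" using x16 by simp
  define a where "a = cc x / (4 * real m)"
  define K where "K = 2 * real m ^ 3 + 2 * real m"
  have m0: "real m \<ge> 1" using m by simp
  have a0: "a > 0" unfolding a_def using cc_pos[OF x0 x1] m0 by simp
  have K0: "K > 0" unfolding K_def using m0 by (simp add: add_pos_pos)
  have d0e: "d0_of m \<epsilon> = max 1 (max (64 * (real m ^ 2 + real m) / \<epsilon>) (256 * real m * K / (a ^ 2 * \<epsilon>)))"
    unfolding d0_of_def a_def K_def x_def ..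
  have d1: "d \<ge> 1" using dd unfolding d0e by simp
  have d2: "d \<ge> 64 * (real m ^ 2 + real m) / \<epsilon>" using dd unfolding d0e by simp
  have d4: "d \<ge> 256 * real m * K / (a ^ 2 * \<epsilon>)" using dd unfolding d0e by simp
  have d3: "(2 * real m ^ 3 + 2 * real m) * (1 + d) * (2 * real m * exp (- cc x * (d / 4) / real m)) \<le> \<epsilon> / 16"
  proof -
    have ex: "- cc x * (d / 4) / real m = - (a * d)" unfolding a_def using m0 by (simp add: field_simps)
    have "(2 * real m ^ 3 + 2 * real m) * (1 + d) * (2 * real m * exp (- cc x * (d / 4) / real m))
        = (2 * real m * K) * ((1 + d) * exp (- (a * d)))" unfolding ex K_def by (simp add: mult_ac)
    also have "\<dots> \<le> (2 * real m * K) * (8 / (a ^ 2 * d))"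
      using expbound[OF a0 d1] K0 m0 by (intro mult_left_mono) auto
    also have "\<dots> = 16 * real m * K / (a ^ 2 * d)" by simp
    also have "\<dots> \<le> \<epsilon> / 16"
    proof -
      have "256 * real m * K / (a ^ 2 * \<epsilon>) \<le> d" by (rule d4)
      then have "256 * real m * K \<le> d * (a ^ 2 * \<epsilon>)" using a0 eps by (simp add: divide_le_eq)
      then show ?thesis using a0 eps d1 by (simp add: divide_le_eq field_simps)
    qed
    finally show ?thesis .
  qed
  show ?thesis
    unfolding Let_def
    using core[OF m eps x_def' gam(1) _ q d1 d2 d3] gam H unfolding x_def by blast
qed

theorem lemma2p4:
  "\<forall>m::nat. m \<ge> 1 \<longrightarrow> (\<forall>\<epsilon>::real. 0 < \<epsilon> \<and> \<epsilon> \<le> 1 \<longrightarrow>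
    (\<exists>\<gamma>0::real. \<gamma>0 > 0 \<and> (\<forall>\<gamma>::real. 0 < \<gamma> \<and> \<gamma> \<le> \<gamma>0 \<longrightarrow>
      (\<exists>d0::real. \<forall>d::real. d \<ge> d0 \<longrightarrow> (\<forall>q::real. q \<ge> 1/2 \<longrightarrow>
        (\<forall>(Vg::nat set) E (V::nat set).
          simple_graph Vg E \<and> (\<forall>v\<in>Vg. real (dG E v Vg) \<le> d) \<and> V \<subseteq> Vg
          \<and> pm_approx (real (card V)) \<gamma> (q * real (card Vg))
          \<and> (\<forall>v\<in>Vg. pm_approx (real (dG E v V)) \<gamma> (q * d))
          \<longrightarrow> (let t = nat \<lceil>(1 - \<epsilon>) * q * real (card Vg) / real m\<rceil> in
               \<exists>Ps::nat list list. length Ps = t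
                 \<and> (\<forall>P\<in>set Ps. is_path_in E V P \<and> length P = m)
                 \<and> (\<forall>i<t. \<forall>j<t. i \<noteq> j \<longrightarrow> set (Ps ! i) \<inter> set (Ps ! j) = {})
                 \<and> (\<forall>v\<in>Vg. real (dG E v ((\<lambda>P. hd P) ` set Ps \<union> (\<lambda>P. last P) ` set Ps))
                              \<le> 4 * d / real m))))))))"
  apply (intro allI impI)
  apply (rule_tac x = "x_of m \<epsilon>" in exI)
  apply (intro conjI allI impI)
   apply (simp add: x_of_pos)
  apply (rule_tac x = "d0_of m \<epsilon>" in exI)
  apply (intro allI impI)
  apply (rule_tac \<gamma> = \<gamma> in inner)
         apply auto
  done

end
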